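(* Let $T$ be a tree on $n$ vertices. Then $k(T)=2$ if and only if $T$ is a star or a balanced double star.
   Context: For a connected graph $G=(V,E)$ and $v\in V$, the status of $v$ is $s(v)=\sum_{u\in V} d(v,u)$, where $d$ is the shortest-path distance; $k(G)$ is the number of distinct status values of vertices of $G$. A star is a tree of diameter $2$, i.e. $K_{1,m}$ with $m\ge 2$. A balanced double star is a graph obtained from $K_2$ by appending $a\ge 1$ pendent vertices to each of its two vertices (the same $a$ for both). *)

theory Defs
  imports Main
begin

definition sgraph :: "'a set \<Rightarrow> ('a \<Rightarrow> 'a \<Rightarrow> bool) \<Rightarrow> bool" where
  "sgraph V E \<longleftrightarrow> finite V \<and> (\<forall>x y. E x y \<longrightarrow> x \<in> V \<and> y \<in> V \<and> x \<noteq> y \<and> E y x)"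

definition walk :: "'a set \<Rightarrow> ('a \<Rightarrow> 'a \<Rightarrow> bool) \<Rightarrow> 'a list \<Rightarrow> bool" where
  "walk V E xs \<longleftrightarrow> xs \<noteq> [] \<and> set xs \<subseteq> V \<and> (\<forall>i. Suc i < length xs \<longrightarrow> E (xs ! i) (xs ! Suc i))"

definition connected_graph :: "'a set \<Rightarrow> ('a \<Rightarrow> 'a \<Rightarrow> bool) \<Rightarrow> bool" where
  "connected_graph V E \<longleftrightarrow> (\<forall>u\<in>V. \<forall>v\<in>V. \<exists>xs. walk V E xs \<and> hd xs = u \<and> last xs = v)"

definition has_cycle :: "'a set \<Rightarrow> ('a \<Rightarrow> 'a \<Rightarrow> bool) \<Rightarrow> bool" where
  "has_cycle V E \<longleftrightarrow> (\<exists>xs. walk V E xs \<and> length xs \<ge> 3 \<and> distinct xs \<and> E (last xs) (hd xs))"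

definition is_tree :: "'a set \<Rightarrow> ('a \<Rightarrow> 'a \<Rightarrow> bool) \<Rightarrow> bool" where
  "is_tree V E \<longleftrightarrow> sgraph V E \<and> V \<noteq> {} \<and> connected_graph V E \<and> \<not> has_cycle V E"

definition gdist :: "'a set \<Rightarrow> ('a \<Rightarrow> 'a \<Rightarrow> bool) \<Rightarrow> 'a \<Rightarrow> 'a \<Rightarrow> nat" where
  "gdist V E u v = (LEAST n. \<exists>xs. walk V E xs \<and> hd xs = u \<and> last xs = v \<and> length xs = Suc n)"

definition status :: "'a set \<Rightarrow> ('a \<Rightarrow> 'a \<Rightarrow> bool) \<Rightarrow> 'a \<Rightarrow> nat" where
  "status V E v = (\<Sum>u\<in>V. gdist V E v u)"

definition num_status :: "'a set \<Rightarrow> ('a \<Rightarrow> 'a \<Rightarrow> bool) \<Rightarrow> nat" where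
  "num_status V E = card (status V E ` V)"

definition diameter :: "'a set \<Rightarrow> ('a \<Rightarrow> 'a \<Rightarrow> bool) \<Rightarrow> nat" where
  "diameter V E = Max {gdist V E u v | u v. u \<in> V \<and> v \<in> V}"

definition is_star :: "'a set \<Rightarrow> ('a \<Rightarrow> 'a \<Rightarrow> bool) \<Rightarrow> bool" where
  "is_star V E \<longleftrightarrow> is_tree V E \<and> diameter V E = 2"

definition is_balanced_double_star :: "'a set \<Rightarrow> ('a \<Rightarrow> 'a \<Rightarrow> bool) \<Rightarrow> bool" where
  "is_balanced_double_star V E \<longleftrightarrow>
     (\<exists>u v A B. u \<noteq> v \<and> finite A \<and> finite B \<and> A \<inter> B = {} \<and>
        u \<notin> A \<union> B \<and> v \<notin> A \<union> B \<and> card A = card B \<and> card A \<ge> 1 \<and>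
        V = {u, v} \<union> A \<union> B \<and>
        (\<forall>x y. E x y \<longleftrightarrow> ((x = u \<and> y = v) \<or> (x = v \<and> y = u) \<or>
                          (x = u \<and> y \<in> A) \<or> (y = u \<and> x \<in> A) \<or>
                          (x = v \<and> y \<in> B) \<or> (y = v \<and> x \<in> B))))"

end

theory Submission
  imports Defs
begin


lemma walk_iff: "walk V E xs \<longleftrightarrow> xs \<noteq> [] \<and> set xs \<subseteq> V \<and> successively E xs"
  unfolding walk_def successively_conv_nth by blast

locale tctx =
  fixes V :: "'a set" and E :: "'a \<Rightarrow> 'a \<Rightarrow> bool"
  assumes tree: "is_tree V E"
begin

lemma sg: "sgraph V E" using tree unfolding is_tree_def by blast
lemma finV: "finite V" using sg unfolding sgraph_def by blast
lemma EV1: "E x y \<Longrightarrow> x \<in> V" using sg unfolding sgraph_def by blast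
lemma EV2: "E x y \<Longrightarrow> y \<in> V" using sg unfolding sgraph_def by blast
lemma Eirr: "E x y \<Longrightarrow> x \<noteq> y" using sg unfolding sgraph_def by blast
lemma Esym: "E x y \<Longrightarrow> E y x" using sg unfolding sgraph_def by blast
lemma Eirr'[simp]: "\<not> E x x" using Eirr by blast
lemma conn: "u \<in> V \<Longrightarrow> v \<in> V \<Longrightarrow> \<exists>xs. walk V E xs \<and> hd xs = u \<and> last xs = v"
  using tree unfolding is_tree_def connected_graph_def by blast
lemma nocyc: "successively E xs \<Longrightarrow> distinct xs \<Longrightarrow> length xs \<ge> 3 \<Longrightarrow> E (last xs) (hd xs) \<Longrightarrow> False"
proof -
  assume a: "successively E xs" "distinct xs" "length xs \<ge> 3" "E (last xs) (hd xs)"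
  have "set xs \<subseteq> V"
  proof
    fix x assume "x \<in> set xs"
    then obtain i where i: "i < length xs" "xs ! i = x" by (auto simp: in_set_conv_nth)
    show "x \<in> V"
    proof (cases "Suc i < length xs")
      case True then show ?thesis using successively_nth[OF a(1) True] i EV1 by blast
    next
      case False
      then have "i = length xs - 1" using i by simp
      moreover have "xs \<noteq> []" using a(3) by auto
      ultimately have "x = last xs" using i by (simp add: last_conv_nth)
      then show ?thesis using a(4) EV1 by blast
    qed
  qed
  then have "walk V E xs" using a by (auto simp: walk_iff)
  then have "has_cycle V E" unfolding has_cycle_def using a by blast
  then show False using tree unfolding is_tree_def by blast
qed

lemma gd_le: "walk V E xs \<Longrightarrow> hd xs = u \<Longrightarrow> last xs = v \<Longrightarrow> gdist V E u v \<le> length xs - 1"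
proof -
  assume a: "walk V E xs" "hd xs = u" "last xs = v"
  then have "length xs = Suc (length xs - 1)" by (cases xs) (auto simp: walk_def)
  then have "\<exists>ys. walk V E ys \<and> hd ys = u \<and> last ys = v \<and> length ys = Suc (length xs - 1)"
    using a by blast
  then show ?thesis unfolding gdist_def by (rule Least_le)
qed

lemma gd_ex: assumes "u \<in> V" "v \<in> V"
  shows "\<exists>xs. walk V E xs \<and> hd xs = u \<and> last xs = v \<and> length xs = Suc (gdist V E u v)"
proof -
  obtain xs where xs: "walk V E xs \<and> hd xs = u \<and> last xs = v" using conn assms by blast
  then have "length xs = Suc (length xs - 1)" by (cases xs) (auto simp: walk_def)
  then have "\<exists>n xs. walk V E xs \<and> hd xs = u \<and> last xs = v \<and> length xs = Suc n"
    using xs by blast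
  then show ?thesis unfolding gdist_def by (rule LeastI_ex)
qed

lemma shortest_distinct:
  assumes "walk V E xs" "hd xs = u" "last xs = v" "length xs = Suc (gdist V E u v)"
  shows "distinct xs"
proof (rule ccontr)
  assume "\<not> distinct xs"
  then obtain as bs cs y where xs: "xs = as @ [y] @ bs @ [y] @ cs" using not_distinct_decomp by blast
  define ys where "ys = as @ [y] @ cs"
  have "successively E xs" "set xs \<subseteq> V" using assms(1) by (auto simp: walk_iff)
  then have "successively E ys" "set ys \<subseteq> V" unfolding ys_def xs
    by (auto simp: successively_append_iff successively_Cons split: if_splits)
  then have w: "walk V E ys" by (auto simp: walk_iff ys_def)
  have "hd ys = u" using assms(2) by (cases as) (auto simp: ys_def xs)
  moreover have "last ys = v" using assms(3) by (cases cs) (auto simp: ys_def xs)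
  ultimately have "gdist V E u v \<le> length ys - 1" using gd_le w by blast
  then show False using assms(4) by (simp add: ys_def xs)
qed

lemma sub_le:
  assumes "walk V E xs" "hd xs = u" "last xs = v" "length xs = Suc (gdist V E u v)" "i < length xs"
  shows "gdist V E (xs ! i) v + i \<le> gdist V E u v"
proof -
  have sx: "successively E xs" "set xs \<subseteq> V" using assms(1) by (simp_all add: walk_iff)
  then have "successively E (take i xs @ drop i xs)" by simp
  then have s: "successively E (drop i xs)" unfolding successively_append_iff by blast
  have "set (drop i xs) \<subseteq> set xs" by (rule set_drop_subset)
  then have "set (drop i xs) \<subseteq> V" using sx(2) by blast
  moreover have "drop i xs \<noteq> []" using assms(5) by simp
  ultimately have w: "walk V E (drop i xs)" using s by (simp add: walk_iff)
  have h: "hd (drop i xs) = xs ! i" using assms(5) by (simp add: hd_drop_conv_nth)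
  have l: "last (drop i xs) = v" using assms(3,5) by simp
  have "gdist V E (xs ! i) v \<le> length (drop i xs) - 1" using gd_le[OF w h l] .
  then show ?thesis using assms(4,5) by simp
qed

lemma gd_mem_less:
  assumes "walk V E xs" "hd xs = u" "last xs = v" "length xs = Suc (gdist V E u v)" "y \<in> set xs" "y \<noteq> u"
  shows "gdist V E y v < gdist V E u v"
proof -
  obtain i where i: "i < length xs" "xs ! i = y" using assms(5) by (auto simp: in_set_conv_nth)
  have "xs \<noteq> []" using i by auto
  then have "hd xs = xs ! 0" by (simp add: hd_conv_nth)
  then have "i \<noteq> 0" using i assms(2,6) by (metis)
  then show ?thesis using sub_le[OF assms(1-4) i(1)] i by simp
qed

lemma gd_mem_le:
  assumes "walk V E xs" "hd xs = u" "last xs = v" "length xs = Suc (gdist V E u v)" "y \<in> set xs"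
  shows "gdist V E y v \<le> gdist V E u v"
  using gd_mem_less[OF assms] by (cases "y = u") auto

lemma gd_prepend: assumes "E x y" "w \<in> V" shows "gdist V E x w \<le> Suc (gdist V E y w)"
proof -
  obtain xs where xs: "walk V E xs" "hd xs = y" "last xs = w" "length xs = Suc (gdist V E y w)"
    using gd_ex EV2[OF assms(1)] assms(2) by blast
  have ne: "xs \<noteq> []" using xs(1) by (simp add: walk_iff)
  have "walk V E (x # xs)" using xs(1,2) assms(1) EV1[OF assms(1)] ne
    by (cases xs) (auto simp: walk_iff)
  moreover have "hd (x # xs) = x" by simp
  moreover have "last (x # xs) = w" using ne xs(3) by simp
  ultimately have "gdist V E x w \<le> length (x # xs) - 1" by (rule gd_le)
  then show ?thesis using xs by simp
qed

lemma gd_self[simp]: "u \<in> V \<Longrightarrow> gdist V E u u = 0"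
  using gd_le[of "[u]" u u] by (simp add: walk_def)

lemma gd_small:
  assumes "u \<in> V" "v \<in> V" "gdist V E u v \<le> 2"
  shows "u = v \<or> E u v \<or> (\<exists>z. E u z \<and> E z v)"
proof -
  obtain xs where xs: "walk V E xs" "hd xs = u" "last xs = v" "length xs = Suc (gdist V E u v)"
    using gd_ex assms by blast
  have se: "successively E xs" using xs(1) by (simp add: walk_iff)
  have "length xs \<le> 3" using xs(4) assms(3) by simp
  then consider "length xs = 1" | "length xs = 2" | "length xs = 3" using xs(4) by linarith
  then show ?thesis
  proof cases
    case 1 then obtain a where "xs = [a]" by (cases xs) auto
    then show ?thesis using xs by auto
  next
    case 2 then obtain a b where "xs = [a,b]" by (cases xs; cases "tl xs") auto
    then show ?thesis using xs se by auto
  next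
    case 3 then obtain a b c where "xs = [a,b,c]" by (cases xs; cases "tl xs"; cases "tl (tl xs)") auto
    then show ?thesis using xs se by auto
  qed
qed

lemma gd_0: assumes "u \<in> V" "v \<in> V" shows "gdist V E u v = 0 \<longleftrightarrow> u = v"
proof
  assume z: "gdist V E u v = 0"
  obtain xs where xs: "walk V E xs" "hd xs = u" "last xs = v" "length xs = Suc (gdist V E u v)"
    using gd_ex assms by blast
  then obtain a where "xs = [a]" using z by (cases xs) auto
  then show "u = v" using xs by simp
qed (use assms in simp)

lemma gd_1: assumes "u \<in> V" "v \<in> V" shows "gdist V E u v = 1 \<longleftrightarrow> E u v"
proof
  assume z: "gdist V E u v = 1"
  obtain xs where xs: "walk V E xs" "hd xs = u" "last xs = v" "length xs = Suc (gdist V E u v)"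
    using gd_ex assms by blast
  then obtain a b where "xs = [a,b]" using z by (cases xs; cases "tl xs") auto
  then show "E u v" using xs by (simp add: walk_iff)
next
  assume e: "E u v"
  have "gdist V E u v \<le> length [u,v] - 1" by (rule gd_le) (use e assms in \<open>auto simp: walk_iff\<close>)
  moreover have "gdist V E u v \<noteq> 0" using gd_0 assms e Eirr by blast
  ultimately show "gdist V E u v = 1" by simp
qed

lemma gd_2: assumes "u \<in> V" "v \<in> V" "u \<noteq> v" "\<not> E u v" "E u z" "E z v"
  shows "gdist V E u v = 2"
proof -
  have "gdist V E u v \<le> length [u,z,v] - 1" by (rule gd_le) (use assms EV1 in \<open>auto simp: walk_iff\<close>)
  moreover have "gdist V E u v \<noteq> 0" using gd_0 assms by blast
  moreover have "gdist V E u v \<noteq> 1" using gd_1 assms by blast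
  ultimately show ?thesis by simp
qed

end


lemma merge:
  assumes sP: "successively E P" and dP: "distinct P" and sQ: "successively E Q" and dQ: "distinct Q"
    and ne: "P \<noteq> []" "Q \<noteq> []" and l: "last P = last Q" and hP: "hd P \<notin> set Q" and hQ: "hd Q \<notin> set P"
    and sym: "\<And>x y. E x y \<Longrightarrow> E y x"
  shows "\<exists>L. successively E L \<and> distinct L \<and> length L \<ge> 3 \<and> hd L = hd P \<and> last L = hd Q \<and> set L \<subseteq> set P \<union> set Q"
proof -
  have "\<exists>x\<in>set P. x \<in> set Q" using l ne by (metis last_in_set)
  then obtain P1 m P2 where P: "P = P1 @ m # P2" and m: "m \<in> set Q" and P1: "\<forall>y\<in>set P1. y \<notin> set Q"
    by (rule split_list_first_propE)
  obtain Q1 Q2 where Q: "Q = Q1 @ m # Q2" using m by (meson split_list)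
  have P1ne: "P1 \<noteq> []" using hP m P by auto
  have Q1ne: "Q1 \<noteq> []" using hQ Q P by auto
  define L where "L = P1 @ m # rev Q1"
  have s1: "successively E P1" "E (last P1) m" using sP P1ne unfolding P successively_append_iff by auto
  have s2: "successively E Q1" "E (last Q1) m" using sQ Q1ne unfolding Q successively_append_iff by auto
  have s2': "successively (\<lambda>x y. E y x) Q1" using s2(1) by (rule successively_mono) (use sym in blast)
  have "successively E (rev (Q1 @ [m]))" using s2' sym[OF s2(2)] Q1ne
    by (simp add: successively_append_iff del: rev_append)
  then have s3: "successively E (m # rev Q1)" by simp
  have sL: "successively E L" unfolding L_def successively_append_iff using s1 s3 by auto
  have dL: "distinct L" unfolding L_def using dP dQ P1 unfolding P Q by auto
  have "length L \<ge> 3" unfolding L_def using P1ne Q1ne by (cases P1; cases Q1) auto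
  moreover have "hd L = hd P" unfolding L_def P using P1ne by simp
  moreover have "last L = hd Q" unfolding L_def Q using Q1ne by (simp add: last_rev)
  moreover have "set L \<subseteq> set P \<union> set Q" unfolding L_def P Q by auto
  ultimately show ?thesis using sL dL by blast
qed

context tctx begin

lemma L1: assumes "E x y" "w \<in> V" shows "gdist V E x w \<noteq> gdist V E y w"
proof
  assume eq: "gdist V E x w = gdist V E y w"
  have xV: "x \<in> V" and yV: "y \<in> V" using assms EV1 EV2 by auto
  obtain P where P: "walk V E P" "hd P = x" "last P = w" "length P = Suc (gdist V E x w)"
    using gd_ex xV assms(2) by blast
  obtain Q where Q: "walk V E Q" "hd Q = y" "last Q = w" "length Q = Suc (gdist V E y w)"
    using gd_ex yV assms(2) by blast
  have dP: "distinct P" using shortest_distinct P by blast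
  have dQ: "distinct Q" using shortest_distinct Q by blast
  have xy: "x \<noteq> y" using Eirr assms by blast
  have "y \<notin> set P" using gd_mem_less[OF P, of y] xy eq by auto
  moreover have "x \<notin> set Q" using gd_mem_less[OF Q, of x] xy eq by auto
  ultimately obtain L where L: "successively E L" "distinct L" "length L \<ge> 3" "hd L = x" "last L = y"
    using merge[of E P Q] P Q dP dQ Esym by (auto simp: walk_iff)
  show False using nocyc[OF L(1-3)] L(4,5) Esym assms(1) by auto
qed

lemma L2: assumes "E x a" "E x b" "a \<noteq> b" "w \<in> V" "gdist V E a w = gdist V E b w"
   "gdist V E x w = Suc (gdist V E a w)"
  shows False
proof -
  have aV: "a \<in> V" and bV: "b \<in> V" using assms EV2 by auto
  obtain P where P: "walk V E P" "hd P = a" "last P = w" "length P = Suc (gdist V E a w)"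
    using gd_ex aV assms(4) by blast
  obtain Q where Q: "walk V E Q" "hd Q = b" "last Q = w" "length Q = Suc (gdist V E b w)"
    using gd_ex bV assms(4) by blast
  have dP: "distinct P" using shortest_distinct P by blast
  have dQ: "distinct Q" using shortest_distinct Q by blast
  have "b \<notin> set P" using gd_mem_less[OF P, of b] assms(3,5) by auto
  moreover have "a \<notin> set Q" using gd_mem_less[OF Q, of a] assms(3,5) by auto
  ultimately obtain L where L: "successively E L" "distinct L" "length L \<ge> 3" "hd L = a" "last L = b"
     "set L \<subseteq> set P \<union> set Q"
    using merge[of E P Q] P Q dP dQ Esym by (auto simp: walk_iff)
  have "x \<notin> set P" using gd_mem_le[OF P, of x] assms(6) by auto
  moreover have "x \<notin> set Q" using gd_mem_le[OF Q, of x] assms(5,6) by auto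
  ultimately have xL: "x \<notin> set L" using L(6) by blast
  have Lne: "L \<noteq> []" using L(3) by auto
  have "successively E (L @ [x])" using L(1,5) Lne Esym[OF assms(2)] by (simp add: successively_append_iff)
  moreover have "distinct (L @ [x])" using L(2) xL by simp
  moreover have "length (L @ [x]) \<ge> 3" using L(3) by simp
  moreover have "E (last (L @ [x])) (hd (L @ [x]))" using Lne L(4) assms(1) by simp
  ultimately show False by (rule nocyc)
qed

lemma conv_pt: assumes "E a x" "E x b" "a \<noteq> b" "w \<in> V"
  shows "2 * gdist V E x w \<le> gdist V E a w + gdist V E b w"
proof -
  have 1: "gdist V E x w \<le> Suc (gdist V E a w)" using gd_prepend Esym assms by blast
  have 2: "gdist V E x w \<le> Suc (gdist V E b w)" using gd_prepend Esym assms by blast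
  have 3: "gdist V E a w \<noteq> gdist V E x w" using L1 assms by blast
  have 4: "gdist V E b w \<noteq> gdist V E x w" using L1 Esym assms by blast
  have 5: "\<not> (gdist V E x w = Suc (gdist V E a w) \<and> gdist V E x w = Suc (gdist V E b w))"
    using L2[of x a b w] Esym assms by auto
  show ?thesis using 1 2 3 4 5 by linarith
qed

lemma conv: assumes "E a x" "E x b" "a \<noteq> b"
  shows "2 * status V E x + 2 \<le> status V E a + status V E b"
proof -
  have xV: "x \<in> V" using assms EV2 by blast
  have aV: "a \<in> V" and bV: "b \<in> V" using assms EV1 EV2 by auto
  let ?f = "\<lambda>w. gdist V E a w + gdist V E b w" and ?g = "\<lambda>w. 2 * gdist V E x w"
  have e0: "status V E a + status V E b = sum ?f V" unfolding status_def by (simp add: sum.distrib)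
  have e1: "sum ?f V = ?f x + sum ?f (V - {x})" using xV finV by (simp add: sum.remove)
  have fx: "?f x = 2"
  proof -
    have "gdist V E a x = 1" using gd_1 assms xV aV by blast
    moreover have "gdist V E b x = 1" using gd_1 Esym assms xV bV by blast
    ultimately show ?thesis by simp
  qed
  have m: "sum ?g (V - {x}) \<le> sum ?f (V - {x})" by (rule sum_mono) (use conv_pt assms in auto)
  have e2: "sum ?g V = ?g x + sum ?g (V - {x})" using xV finV by (simp add: sum.remove)
  have e3: "sum ?g V = 2 * status V E x" unfolding status_def by (simp add: sum_distrib_left)
  have "?g x = 0" using xV by simp
  then show ?thesis using e0 e1 fx m e2 e3 by linarith
qed

end


definition dsf :: "'a set \<Rightarrow> ('a \<Rightarrow> 'a \<Rightarrow> bool) \<Rightarrow> 'a \<Rightarrow> 'a \<Rightarrow> 'a set \<Rightarrow> 'a set \<Rightarrow> bool" where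
  "dsf V E u v A B \<longleftrightarrow> u \<noteq> v \<and> finite A \<and> finite B \<and> A \<inter> B = {} \<and>
        u \<notin> A \<union> B \<and> v \<notin> A \<union> B \<and>
        V = {u, v} \<union> A \<union> B \<and>
        (\<forall>x y. E x y \<longleftrightarrow> ((x = u \<and> y = v) \<or> (x = v \<and> y = u) \<or>
                          (x = u \<and> y \<in> A) \<or> (y = u \<and> x \<in> A) \<or>
                          (x = v \<and> y \<in> B) \<or> (y = v \<and> x \<in> B)))"

lemma bds_iff: "is_balanced_double_star V E \<longleftrightarrow> (\<exists>u v A B. dsf V E u v A B \<and> card A = card B \<and> card A \<ge> 1)"
  unfolding is_balanced_double_star_def dsf_def
  by (rule iffI; elim exE conjE; intro exI conjI; assumption)

lemma dsf_swap: "dsf V E u v A B \<Longrightarrow> dsf V E v u B A"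
  unfolding dsf_def
proof (elim conjE, intro conjI)
  assume e: "\<forall>x y. E x y \<longleftrightarrow> ((x = u \<and> y = v) \<or> (x = v \<and> y = u) \<or>
                          (x = u \<and> y \<in> A) \<or> (y = u \<and> x \<in> A) \<or>
                          (x = v \<and> y \<in> B) \<or> (y = v \<and> x \<in> B))"
  show "\<forall>x y. E x y \<longleftrightarrow> ((x = v \<and> y = u) \<or> (x = u \<and> y = v) \<or>
                          (x = v \<and> y \<in> B) \<or> (y = v \<and> x \<in> B) \<or>
                          (x = u \<and> y \<in> A) \<or> (y = u \<and> x \<in> A))"
  proof (intro allI)
    fix x y show "E x y \<longleftrightarrow> ((x = v \<and> y = u) \<or> (x = u \<and> y = v) \<or>
                          (x = v \<and> y \<in> B) \<or> (y = v \<and> x \<in> B) \<or>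
                          (x = u \<and> y \<in> A) \<or> (y = u \<and> x \<in> A))"
      using spec[OF spec[OF e, of x], of y] by argo
  qed
qed auto

lemma dsf_sum: assumes "dsf V E u v A B"
  shows "sum f V = f u + f v + sum f A + sum f B"
proof -
  have d: "u \<noteq> v" "finite A" "finite B" "A \<inter> B = {}" "u \<notin> A \<union> B" "v \<notin> A \<union> B" "V = insert u (insert v (A \<union> B))"
    using assms unfolding dsf_def by auto
  have "sum f V = f u + sum f (insert v (A \<union> B))" using d by (simp add: sum.insert)
  also have "sum f (insert v (A \<union> B)) = f v + sum f (A \<union> B)" using d by (simp add: sum.insert)
  also have "sum f (A \<union> B) = sum f A + sum f B" using d by (simp add: sum.union_disjoint)
  finally show ?thesis by (simp add: add.assoc)
qed

context tctx begin

lemma ds_u: assumes ds: "dsf V E u v A B" shows "status V E u = 1 + card A + 2 * card B"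
proof -
  have d: "u \<noteq> v" "finite A" "finite B" "A \<inter> B = {}" "u \<notin> A \<union> B" "v \<notin> A \<union> B" "V = {u, v} \<union> A \<union> B"
    and e: "\<And>x y. E x y \<longleftrightarrow> ((x = u \<and> y = v) \<or> (x = v \<and> y = u) \<or>
                          (x = u \<and> y \<in> A) \<or> (y = u \<and> x \<in> A) \<or>
                          (x = v \<and> y \<in> B) \<or> (y = v \<and> x \<in> B))"
    using ds unfolding dsf_def by auto
  have uV: "u \<in> V" and vV: "v \<in> V" using d by auto
  have 1: "gdist V E u v = 1" using gd_1 uV vV e by auto
  have 2: "gdist V E u w = 1" if "w \<in> A" for w using gd_1[of u w] uV d that e by auto
  have 3: "gdist V E u w = 2" if "w \<in> B" for w
    by (rule gd_2[of u w v]) (use uV d that e in auto)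
  have "status V E u = gdist V E u u + gdist V E u v + sum (gdist V E u) A + sum (gdist V E u) B"
    unfolding status_def by (rule dsf_sum[OF ds])
  also have "sum (gdist V E u) A = sum (\<lambda>_. 1) A" using 2 by (rule sum.cong[OF refl])
  also have "sum (gdist V E u) B = sum (\<lambda>_. 2) B" using 3 by (rule sum.cong[OF refl])
  finally show ?thesis using 1 uV by simp
qed

lemma ds_a: assumes ds: "dsf V E u v A B" and aA: "a \<in> A" shows "status V E a = 1 + 2 * card A + 3 * card B"
proof -
  have d: "u \<noteq> v" "finite A" "finite B" "A \<inter> B = {}" "u \<notin> A \<union> B" "v \<notin> A \<union> B" "V = {u, v} \<union> A \<union> B"
    and e: "\<And>x y. E x y \<longleftrightarrow> ((x = u \<and> y = v) \<or> (x = v \<and> y = u) \<or>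
                          (x = u \<and> y \<in> A) \<or> (y = u \<and> x \<in> A) \<or>
                          (x = v \<and> y \<in> B) \<or> (y = v \<and> x \<in> B))"
    using ds unfolding dsf_def by auto
  have uV: "u \<in> V" and vV: "v \<in> V" and aV: "a \<in> V" using d aA by auto
  have 1: "gdist V E a u = 1" using gd_1 uV aV e aA by auto
  have 2: "gdist V E a v = 2"
    by (rule gd_2[of a v u]) (use aA d e in auto)
  have 3: "gdist V E a w = (if w = a then 0 else 2)" if "w \<in> A" for w
  proof (cases "w = a")
    case True then show ?thesis using aV by simp
  next
    case False
    have "gdist V E a w = 2" by (rule gd_2[of a w u]) (use aA d e that False in auto)
    then show ?thesis using False by simp
  qed
  have 4: "gdist V E a w = 3" if wB: "w \<in> B" for w
  proof -
    have wV: "w \<in> V" using wB d by auto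
    have "gdist V E a w \<le> length [a,u,v,w] - 1" by (rule gd_le) (use aA wB d e in \<open>auto simp: walk_iff\<close>)
    moreover have "\<not> gdist V E a w \<le> 2"
    proof
      assume "gdist V E a w \<le> 2"
      then have "a = w \<or> E a w \<or> (\<exists>z. E a z \<and> E z w)" using gd_small aV wV by blast
      moreover have "a \<noteq> w" using aA wB d(4) by blast
      moreover have "\<not> E a w" unfolding e using aA wB d by auto
      moreover have "\<not>(\<exists>z. E a z \<and> E z w)" unfolding e using aA wB d by auto
      ultimately show False by blast
    qed
    ultimately show ?thesis by simp
  qed
  have "status V E a = gdist V E a u + gdist V E a v + sum (gdist V E a) A + sum (gdist V E a) B"
    unfolding status_def by (rule dsf_sum[OF ds])
  also have "sum (gdist V E a) A = sum (\<lambda>w. if w = a then 0 else 2) A" using 3 by (rule sum.cong[OF refl])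
  also have "\<dots> = 2 * (card A - 1)"
  proof -
    have "A \<inter> - {a} = A - {a}" by blast
    then show ?thesis using aA d(2) by (simp add: sum.If_cases)
  qed
  also have "sum (gdist V E a) B = sum (\<lambda>_. 3) B" using 4 by (rule sum.cong[OF refl])
  finally show ?thesis using 1 2 aA d(2) by (cases "card A") auto
qed

lemma ds_num: assumes ds: "dsf V E u v A B" and c: "card A = card B" "card A \<ge> 1"
  shows "num_status V E = 2"
proof -
  have d: "V = {u, v} \<union> A \<union> B" "finite A" using ds unfolding dsf_def by auto
  have dsw: "dsf V E v u B A" using dsf_swap[OF ds] .
  obtain a where a: "a \<in> A" using c d by (metis card.empty ex_in_conv not_one_le_zero)
  obtain b where b: "b \<in> B" using c d ds unfolding dsf_def by (metis card.empty ex_in_conv not_one_le_zero)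
  let ?m = "card A"
  have su: "status V E u = 3 * ?m + 1" using ds_u[OF ds] c by simp
  have sv: "status V E v = 3 * ?m + 1" using ds_u[OF dsw] c by simp
  have sa: "\<forall>x\<in>A. status V E x = 5 * ?m + 1" using ds_a[OF ds] c by simp
  have sb: "\<forall>x\<in>B. status V E x = 5 * ?m + 1" using ds_a[OF dsw] c by simp
  have "status V E ` V = {3 * ?m + 1, 5 * ?m + 1}"
  proof
    show "status V E ` V \<subseteq> {3 * ?m + 1, 5 * ?m + 1}" using su sv sa sb d(1) by auto
    show "{3 * ?m + 1, 5 * ?m + 1} \<subseteq> status V E ` V"
      using su a sa d(1) by (auto intro!: image_eqI[of _ _ u] image_eqI[of _ _ a])
  qed
  moreover have "3 * ?m + 1 \<noteq> 5 * ?m + 1" using c by simp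
  ultimately show ?thesis unfolding num_status_def by simp
qed

end


context tctx begin

lemma tri: "E x y \<Longrightarrow> E y z \<Longrightarrow> E z x \<Longrightarrow> False"
proof -
  assume e: "E x y" "E y z" "E z x"
  have "distinct [x,y,z]" using e Eirr by auto
  moreover have "successively E [x,y,z]" using e by simp
  ultimately show False using nocyc[of "[x,y,z]"] e by simp
qed

lemma quad: "E x y \<Longrightarrow> E y z \<Longrightarrow> E z t \<Longrightarrow> E t x \<Longrightarrow> x \<noteq> z \<Longrightarrow> y \<noteq> t \<Longrightarrow> False"
proof -
  assume e: "E x y" "E y z" "E z t" "E t x" "x \<noteq> z" "y \<noteq> t"
  have "distinct [x,y,z,t]" using e Eirr by auto
  moreover have "successively E [x,y,z,t]" using e by simp
  ultimately show False using nocyc[of "[x,y,z,t]"] e by simp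
qed

lemma chain4_far: assumes e: "E a u" "E u v" "E v b" "a \<noteq> v" "u \<noteq> b"
  shows "\<not> gdist V E a b \<le> 2"
proof
  assume "gdist V E a b \<le> 2"
  moreover have "a \<in> V" "b \<in> V" using e EV1 EV2 by auto
  ultimately have c: "a = b \<or> E a b \<or> (\<exists>z. E a z \<and> E z b)" using gd_small by blast
  show False
  proof (cases "a = b")
    case True then show ?thesis using tri[of a u v] e by simp
  next
    case ab: False
    show ?thesis
    proof (cases "E a b")
      case True then show ?thesis using quad[of a u v b] e Esym by blast
    next
      case False
      then obtain z where z: "E a z" "E z b" using c ab by blast
      show ?thesis
      proof (cases "z = u \<or> z = v")
        case True then show ?thesis using tri[of u v b] tri[of a u v] z e Esym by blast
      next
        case False
        have "distinct [a,u,v,b,z]" using e Eirr z False ab by auto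
        moreover have "successively E [a,u,v,b,z]" using e z Esym by simp
        ultimately show False using nocyc[of "[a,u,v,b,z]"] z Esym by simp
      qed
    qed
  qed
qed

lemma two_vals: assumes "num_status V E = 2"
  obtains p q where "\<And>x. x \<in> V \<Longrightarrow> status V E x = p \<or> status V E x = q"
proof -
  obtain p q where "status V E ` V = {p, q}" using assms unfolding num_status_def card_2_iff by blast
  then show ?thesis using that by blast
qed

lemma no5: assumes ns: "num_status V E = 2"
  and e: "E x0 x1" "E x1 x2" "E x2 x3" "E x3 x4" "x0 \<noteq> x2" "x1 \<noteq> x3" "x2 \<noteq> x4"
  shows False
proof -
  obtain p q where pq: "\<And>x. x \<in> V \<Longrightarrow> status V E x = p \<or> status V E x = q" using two_vals ns by blast
  have c1: "2 * status V E x1 + 2 \<le> status V E x0 + status V E x2" using conv e by blast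
  have c2: "2 * status V E x2 + 2 \<le> status V E x1 + status V E x3" using conv e by blast
  have c3: "2 * status V E x3 + 2 \<le> status V E x2 + status V E x4" using conv e by blast
  have "x0 \<in> V" "x1 \<in> V" "x2 \<in> V" "x3 \<in> V" "x4 \<in> V" using e EV1 EV2 by auto
  then have "status V E x0 = p \<or> status V E x0 = q" "status V E x1 = p \<or> status V E x1 = q"
    "status V E x2 = p \<or> status V E x2 = q" "status V E x3 = p \<or> status V E x3 = q"
    "status V E x4 = p \<or> status V E x4 = q" using pq by auto
  then show False using c1 c2 c3 by (elim disjE) linarith+
qed

lemma mid4: assumes ns: "num_status V E = 2"
  and e: "E a u" "E u v" "E v b" "a \<noteq> v" "u \<noteq> b"
  shows "status V E u = status V E v"
proof -
  obtain p q where pq: "\<And>x. x \<in> V \<Longrightarrow> status V E x = p \<or> status V E x = q" using two_vals ns by blast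
  have c1: "2 * status V E u + 2 \<le> status V E a + status V E v" using conv e by blast
  have c2: "2 * status V E v + 2 \<le> status V E u + status V E b" using conv e by blast
  have "a \<in> V" "u \<in> V" "v \<in> V" "b \<in> V" using e EV1 EV2 by auto
  then have "status V E a = p \<or> status V E a = q" "status V E u = p \<or> status V E u = q"
    "status V E v = p \<or> status V E v = q" "status V E b = p \<or> status V E b = q" using pq by auto
  then show ?thesis using c1 c2 by (elim disjE) linarith+
qed

lemma far: assumes ns: "num_status V E = 2"
  and e: "E b v" "b \<noteq> u" "E v u" "w \<in> V" "gdist V E v w = Suc (gdist V E u w)" "gdist V E u w \<ge> 2"
  shows False
proof -
  have uV: "u \<in> V" using e EV2 by blast
  obtain P where P: "walk V E P" "hd P = u" "last P = w" "length P = Suc (gdist V E u w)"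
    using gd_ex uV e(4) by blast
  have dP: "distinct P" using shortest_distinct P by blast
  have sP: "successively E P" using P(1) by (simp add: walk_iff)
  have len: "length P \<ge> 3" using P(4) e(6) by simp
  have "P \<noteq> []" using len by auto
  then have p0: "P ! 0 = u" using P(2) by (simp add: hd_conv_nth)
  have e1: "E u (P ! 1)" using successively_nth[OF sP, of 0] len p0 by simp
  have e2: "E (P ! 1) (P ! 2)" using successively_nth[OF sP, of 1] len by (simp add: numeral_2_eq_2)
  have l3: "1 < length P" "0 < length P" "2 < length P" using len by auto
  have "(P!1 = P!0) = (1 = (0::nat))" by (rule nth_eq_iff_index_eq[OF dP l3(1,2)])
  then have n1: "P ! 1 \<noteq> u" using p0 by simp
  have "(P!2 = P!0) = (2 = (0::nat))" by (rule nth_eq_iff_index_eq[OF dP l3(3,2)])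
  then have n2: "P ! 2 \<noteq> u" using p0 by simp
  have "P ! 1 \<in> set P" using len by simp
  then have "gdist V E (P ! 1) w < gdist V E u w" using gd_mem_less[OF P] n1 by blast
  then have n3: "v \<noteq> P ! 1" using e(5) by auto
  show False using no5[OF ns e(1) e(3) e1 e2] e(2) n3 n2 by blast
qed

lemma diam_fin: "finite {gdist V E u v | u v. u \<in> V \<and> v \<in> V}"
proof -
  have "{gdist V E u v | u v. u \<in> V \<and> v \<in> V} = (\<lambda>(u,v). gdist V E u v) ` (V \<times> V)" by auto
  then show ?thesis using finV by simp
qed

lemma diam_ge: "u \<in> V \<Longrightarrow> v \<in> V \<Longrightarrow> gdist V E u v \<le> diameter V E"
  unfolding diameter_def using diam_fin by (intro Max_ge) auto

lemma diam_att: "\<exists>u\<in>V. \<exists>v\<in>V. gdist V E u v = diameter V E"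
proof -
  have "V \<noteq> {}" using tree unfolding is_tree_def by blast
  then have "{gdist V E u v | u v. u \<in> V \<and> v \<in> V} \<noteq> {}" by auto
  then have "diameter V E \<in> {gdist V E u v | u v. u \<in> V \<and> v \<in> V}"
    unfolding diameter_def using diam_fin by (intro Max_in) auto
  then obtain u v where "diameter V E = gdist V E u v" "u \<in> V" "v \<in> V" by blast
  then show ?thesis by metis
qed

end


context tctx begin

lemma star_num: assumes cV: "c \<in> V" and hub: "\<And>w. w \<in> V \<Longrightarrow> w \<noteq> c \<Longrightarrow> E w c"
  and ne: "\<And>x y. E x y \<Longrightarrow> x = c \<or> y = c" and c3: "card V \<ge> 3"
  shows "num_status V E = 2"
proof -
  define L where "L = V - {c}"
  have fL: "finite L" using finV L_def by simp
  have cL: "card L = card V - 1" using cV finV L_def by simp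
  have LV: "L \<subseteq> V" using L_def by auto
  have sc: "status V E c = card L"
  proof -
    have "status V E c = gdist V E c c + sum (gdist V E c) L"
      unfolding status_def L_def using cV finV by (simp add: sum.remove)
    also have "sum (gdist V E c) L = sum (\<lambda>_. 1) L"
      by (rule sum.cong[OF refl]) (use gd_1 hub Esym cV L_def in auto)
    finally show ?thesis using cV by simp
  qed
  have sl: "status V E l = 2 * card L - 1" if lL: "l \<in> L" for l
  proof -
    have lV: "l \<in> V" and lc: "l \<noteq> c" using lL L_def by auto
    have "status V E l = gdist V E l c + sum (gdist V E l) L"
      unfolding status_def L_def using cV finV by (simp add: sum.remove)
    also have "sum (gdist V E l) L = gdist V E l l + sum (gdist V E l) (L - {l})"
      using lL fL by (simp add: sum.remove)
    also have "sum (gdist V E l) (L - {l}) = sum (\<lambda>_. 2) (L - {l})"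
    proof (rule sum.cong[OF refl])
      fix w assume w: "w \<in> L - {l}"
      show "gdist V E l w = 2"
        by (rule gd_2[of l w c]) (use w L_def lV lc hub Esym ne[of l w] in auto)
    qed
    also have "gdist V E l c = 1" using gd_1 hub lV lc cV by blast
    finally show ?thesis using lV lL fL by (cases "card L") (auto simp: card_Diff_singleton)
  qed
  have m2: "card L \<ge> 2" using cL c3 by simp
  then obtain l where lL: "l \<in> L" by (metis card.empty ex_in_conv not_numeral_le_zero)
  have "status V E ` V = {card L, 2 * card L - 1}"
  proof
    show "status V E ` V \<subseteq> {card L, 2 * card L - 1}" using sc sl L_def by auto
    have "card L \<in> status V E ` V" using sc cV by (metis image_eqI)
    moreover have "2 * card L - 1 \<in> status V E ` V" using sl[OF lL] lL LV by (metis image_eqI subsetD)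
    ultimately show "{card L, 2 * card L - 1} \<subseteq> status V E ` V" by simp
  qed
  moreover have "card L \<noteq> 2 * card L - 1" using m2 by simp
  ultimately show ?thesis unfolding num_status_def by simp
qed

lemma star_fwd: assumes "is_star V E" shows "num_status V E = 2"
proof -
  have D: "diameter V E = 2" using assms unfolding is_star_def by blast
  obtain u0 v0 where uv: "u0 \<in> V" "v0 \<in> V" "gdist V E u0 v0 = 2" using diam_att D by metis
  have "u0 \<noteq> v0" using uv by auto
  moreover have "\<not> E u0 v0" using gd_1[OF uv(1,2)] uv(3) by simp
  ultimately obtain c where c: "E u0 c" "E c v0" using gd_small uv by fastforce
  have cV: "c \<in> V" using c EV2 by blast
  have unv: "u0 \<noteq> v0" using uv by auto
  have hub: "E w c" if w: "w \<in> V" "w \<noteq> c" for w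
  proof (rule ccontr)
    assume nE: "\<not> E w c"
    have "gdist V E c w \<le> 2" using diam_ge cV w D by metis
    moreover have "c \<noteq> w" "\<not> E c w" using w nE Esym by auto
    ultimately obtain x where x: "E c x" "E x w" using gd_small cV w by blast
    obtain y where y: "y \<in> {u0, v0}" "y \<noteq> x" using unv by blast
    have "E y c" using y c Esym by auto
    then have "\<not> gdist V E y w \<le> 2" using chain4_far[of y c x w] x y w by blast
    moreover have "gdist V E y w \<le> 2" using diam_ge[of y w] y uv w D by auto
    ultimately show False by blast
  qed
  have ne: "x = c \<or> y = c" if "E x y" for x y
    using that hub tri[of x y c] EV1 EV2 Esym by blast
  have "card {u0, v0, c} = 3" using unv Eirr[OF c(1)] Eirr[OF c(2)] by auto
  moreover have "{u0, v0, c} \<subseteq> V" using uv cV by auto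
  ultimately have "card V \<ge> 3" using finV by (metis card_mono)
  then show ?thesis using star_num[OF cV] hub ne by blast
qed

lemma conv_main: assumes ns: "num_status V E = 2"
  shows "is_star V E \<or> is_balanced_double_star V E"
proof -
  consider "diameter V E \<le> 1" | "diameter V E = 2" | "diameter V E \<ge> 3" by linarith
  then show ?thesis
  proof cases
    case 1
    have "status V E x = card V - 1" if xV: "x \<in> V" for x
    proof -
      have "status V E x = gdist V E x x + sum (gdist V E x) (V - {x})"
        unfolding status_def using xV finV by (simp add: sum.remove)
      also have "sum (gdist V E x) (V - {x}) = sum (\<lambda>_. 1) (V - {x})"
      proof (rule sum.cong[OF refl])
        fix w assume w: "w \<in> V - {x}"
        have "gdist V E x w \<le> 1" using diam_ge[of x w] 1 xV w by auto
        moreover have "gdist V E x w \<noteq> 0" using gd_0 xV w by auto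
        ultimately show "gdist V E x w = 1" by simp
      qed
      finally show ?thesis using xV finV by simp
    qed
    then have "status V E ` V \<subseteq> {card V - 1}" by auto
    then have "card (status V E ` V) \<le> card {card V - 1}" by (intro card_mono) auto
    then have "card (status V E ` V) \<le> 1" by simp
    then show ?thesis using ns unfolding num_status_def by simp
  next
    case 2 then show ?thesis using tree unfolding is_star_def by blast
  next
    case 3
    obtain u0 v0 where uv: "u0 \<in> V" "v0 \<in> V" "gdist V E u0 v0 = diameter V E" using diam_att by metis
    obtain P where P: "walk V E P" "hd P = u0" "last P = v0" "length P = Suc (gdist V E u0 v0)"
      using gd_ex uv by blast
    have dP: "distinct P" using shortest_distinct P by blast
    have sP: "successively E P" using P(1) by (simp add: walk_iff)
    have len: "length P \<ge> 4" using P(4) uv 3 by simp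
    define a where "a = P ! 0"
    define u where "u = P ! 1"
    define v where "v = P ! 2"
    define b where "b = P ! 3"
    have eau: "E a u" using successively_nth[OF sP, of 0] len a_def u_def by simp
    have euv: "E u v" using successively_nth[OF sP, of 1] len u_def v_def by (simp add: numeral_2_eq_2)
    have evb: "E v b" using successively_nth[OF sP, of 2] len v_def b_def by (simp add: numeral_3_eq_3)
    have l4: "0 < length P" "1 < length P" "2 < length P" "3 < length P" using len by auto
    have "(P!0 = P!2) = (0 = (2::nat))" by (rule nth_eq_iff_index_eq[OF dP l4(1,3)])
    then have av: "a \<noteq> v" using a_def v_def by simp
    have "(P!1 = P!3) = (1 = (3::nat))" by (rule nth_eq_iff_index_eq[OF dP l4(2,4)])
    then have ub: "u \<noteq> b" using u_def b_def by simp
    have suv: "status V E u = status V E v" using mid4[OF ns eau euv evb av ub] .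
    have uV: "u \<in> V" and vV: "v \<in> V" and aV: "a \<in> V" using euv eau EV1 EV2 by auto
    have unv: "u \<noteq> v" using euv Eirr by blast
    have cover: "w = u \<or> w = v \<or> E w u \<or> E w v" if wV: "w \<in> V" for w
    proof (rule ccontr)
      assume nc: "\<not> (w = u \<or> w = v \<or> E w u \<or> E w v)"
      have d1: "gdist V E u w \<ge> 2" using gd_0[OF uV wV] gd_1[OF uV wV] nc Esym by fastforce
      have d2: "gdist V E v w \<ge> 2" using gd_0[OF vV wV] gd_1[OF vV wV] nc Esym by fastforce
      have n: "gdist V E u w \<noteq> gdist V E v w" using L1 euv wV by blast
      have p1: "gdist V E u w \<le> Suc (gdist V E v w)" using gd_prepend euv wV by blast
      have p2: "gdist V E v w \<le> Suc (gdist V E u w)" using gd_prepend Esym euv wV by blast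
      consider "gdist V E v w = Suc (gdist V E u w)" | "gdist V E u w = Suc (gdist V E v w)"
        using n p1 p2 by linarith
      then show False
      proof cases
        case 1
        show False by (rule far[OF ns evb[THEN Esym] ub[symmetric] euv[THEN Esym] wV 1 d1])
      next
        case 2
        show False by (rule far[OF ns eau av euv wV 2 d2])
      qed
    qed
    define A where "A = {w \<in> V. E w u \<and> w \<noteq> v}"
    define B where "B = {w \<in> V. E w v \<and> w \<noteq> u}"
    have ds: "dsf V E u v A B"
      unfolding dsf_def
    proof (intro conjI)
      show "u \<noteq> v" by (rule unv)
      show "finite A" "finite B" using finV A_def B_def by auto
      show "A \<inter> B = {}" using A_def B_def tri[of _ u v] euv Esym by blast
      show "u \<notin> A \<union> B" "v \<notin> A \<union> B" using A_def B_def by auto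
      show "V = {u, v} \<union> A \<union> B" using cover A_def B_def uV vV by auto
      show "\<forall>x y. E x y \<longleftrightarrow> ((x = u \<and> y = v) \<or> (x = v \<and> y = u) \<or>
                          (x = u \<and> y \<in> A) \<or> (y = u \<and> x \<in> A) \<or>
                          (x = v \<and> y \<in> B) \<or> (y = v \<and> x \<in> B))"
      proof (intro allI iffI)
        fix x y assume exy: "E x y"
        have xV: "x \<in> V" and yV: "y \<in> V" using exy EV1 EV2 by auto
        show "(x = u \<and> y = v) \<or> (x = v \<and> y = u) \<or>
                          (x = u \<and> y \<in> A) \<or> (y = u \<and> x \<in> A) \<or>
                          (x = v \<and> y \<in> B) \<or> (y = v \<and> x \<in> B)"
        proof (cases "x = u \<or> x = v \<or> y = u \<or> y = v")
          case True then show ?thesis using exy Esym xV yV A_def B_def by auto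
        next
          case False
          then have "(E x u \<or> E x v) \<and> (E y u \<or> E y v)" using cover xV yV by blast
          moreover have "x \<noteq> y" using exy Eirr by blast
          ultimately show ?thesis
            using tri[of x y u] tri[of x y v] quad[of x u v y] quad[of y u v x] exy euv Esym False
            by blast
        qed
      next
        fix x y assume "(x = u \<and> y = v) \<or> (x = v \<and> y = u) \<or>
                          (x = u \<and> y \<in> A) \<or> (y = u \<and> x \<in> A) \<or>
                          (x = v \<and> y \<in> B) \<or> (y = v \<and> x \<in> B)"
        then show "E x y" using euv Esym A_def B_def by auto
      qed
    qed
    have "card A = card B"
      using ds_u[OF ds] ds_u[OF dsf_swap[OF ds]] suv by simp
    moreover have "a \<in> A" using A_def aV eau av by simp
    then have "card A \<ge> 1" using finV A_def
      by (metis (no_types, lifting) One_nat_def Suc_leI card_gt_0_iff empty_iff finite_subset mem_Collect_eq subsetI)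
    ultimately show ?thesis using ds bds_iff by blast
  qed
qed

end

theorem proposition3p5:
  fixes V :: "'a set" and E :: "'a \<Rightarrow> 'a \<Rightarrow> bool"
  assumes "is_tree V E"
  shows "num_status V E = 2 \<longleftrightarrow> is_star V E \<or> is_balanced_double_star V E"
proof -
  interpret tctx V E using assms by unfold_locales
  show ?thesis
  proof
    assume "num_status V E = 2" then show "is_star V E \<or> is_balanced_double_star V E" by (rule conv_main)
  next
    assume "is_star V E \<or> is_balanced_double_star V E"
    then show "num_status V E = 2"
    proof
      assume "is_star V E" then show ?thesis by (rule star_fwd)
    next
      assume "is_balanced_double_star V E"
      from this[unfolded bds_iff] obtain u v A B where "dsf V E u v A B" "card A = card B" "card A \<ge> 1" by blast
      then show ?thesis using ds_num by blast
    qed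
  qed
qed


end
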